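(* Assume the setting below. Let $[q]\in R$. If $\nu(q)$ cannot be written as $\boldsymbol w\otimes\mathbf x$ with $\boldsymbol w\in\mathbb W$ and $\mathbf x\in\mathrm{Im}\mathbb H$, then the action of $T^k$ on $\mathbb{HP}^{k-1}$ is locally free at $[q]$ (i.e. the stabilizer of $[q]$ is finite). Furthermore, the action of $G_{\mathcal S}$ on $R$ is locally free.
   Context: $F$ is a 2-torus, Lie algebra $\mathfrak f\cong\mathbb{R}^2$, lattice $\Lambda\cong\mathbb{Z}^2$. $\mathcal{S}=\{u_1,\dots,u_k\}\subset\Lambda$ is an ordered set generating $\Lambda$, with cyclically consecutive elements linearly independent, each $u_i$ either $(p,0)$ with $p>0$ or with positive second coordinate, $u_1=(p,0)$, and convex ($u_1,\dots,u_k$ outward normals of a convex polygon). Set $v_1=u_1+u_k$, $v_i=u_i-u_{i-1}$ ($2\le i\le k$), $\Omega:\mathbb{R}^k\to\mathfrak f$, $e_i\mapsto v_i$, $\mathfrak g=\ker\Omega$. Conformal data: $\zeta_1,\dots,\zeta_k$ with $|\zeta_i|=1$, $0=\arg\zeta_1<\dots<\arg\zeta_k<2\pi$; $z_i=\zeta_i^{1/2}$, $0\le\arg z_i<\pi$; $\mathbb W=\mathrm{span}\{\mathrm{Re}\boldsymbol z,\mathrm{Im}\boldsymbol z\}\subset(\mathbb R^k)^*$ where $\boldsymbol z=(z_1,\dots,z_k)$; $B^*:(\mathbb R^k)^*\to\mathfrak g^*$ linear with kernel $\mathbb W$. $\mathbb H^k$ has coordinates $q_m=x_m+y_mj$; $\mathcal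 U=\mathbb H^k/\{\pm1\}$; $T^k$ is the diagonal torus $\{(\lambda_1,\dots,\lambda_k):\lambda_m\in U(1)\subset\mathbb C\}$ acting by $q_m\mapsto q_m\lambda_m$, modulo $(-1,\dots,-1)$, acting on $\mathcal U$ and on $\mathbb{HP}^{k-1}$ by $[q_1:\dots:q_k]\mapsto[q_1\lambda_1:\dots:q_k\lambda_k]$; its Lie algebra is $\mathbb R^k$, and $G_{\mathcal S}\subset T^k$ is the $(k-2)$-dimensional subtorus with Lie algebra $\mathfrak g$. $\nu_m(q)=(|x_m|^2-|y_m|^2,\mathrm{Re}(2ix_my_m),\mathrm{Im}(2ix_my_m))\in\mathrm{Im}\mathbb H$, $\nu=(\nu_1,\dots,\nu_k)$ viewed in $(\mathbb R^k)^*\otimes\mathrm{Im}\mathbb H$, $\mu_{\mathcal R}=B^*\circ\nu$, $P=\mu_{\mathcal R}^{-1}(0)\setminus\{0\}\subset\mathcal U$, and $R=\{[q]\in\mathbb{HP}^{k-1}:q\in P\}$. *)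

theory Defs
  imports "HOL-Analysis.Analysis"
begin

text \<open>A quaternion q = x + y j is represented by the pair (x, y) of complex numbers.
  Indices 1..k of the paper are shifted to 0..<k.\<close>

type_synonym quat = "complex \<times> complex"

text \<open>Left multiplication by a quaternion h = a + b j:
  (a + b j)(x + y j) = (a x - b conj y) + (a y + b conj x) j.\<close>
definition qlmul :: "quat \<Rightarrow> quat \<Rightarrow> quat" where
  "qlmul h p = (fst h * fst p - snd h * cnj (snd p), fst h * snd p + snd h * cnj (fst p))"

text \<open>Right multiplication by a complex number l: (x + y j) l = x l + y (cnj l) j.\<close>
definition qrmul :: "quat \<Rightarrow> complex \<Rightarrow> quat" where
  "qrmul p l = (fst p * l, snd p * cnj l)"

text \<open>The three Im H components of nu, as vectors in (R^k)^* (zero outside 0..<k).\<close>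
definition nu1 :: "nat \<Rightarrow> (nat \<Rightarrow> quat) \<Rightarrow> nat \<Rightarrow> real" where
  "nu1 k q m = (if m < k then (cmod (fst (q m)))\<^sup>2 - (cmod (snd (q m)))\<^sup>2 else 0)"
definition nu2 :: "nat \<Rightarrow> (nat \<Rightarrow> quat) \<Rightarrow> nat \<Rightarrow> real" where
  "nu2 k q m = (if m < k then Re (2 * \<i> * fst (q m) * snd (q m)) else 0)"
definition nu3 :: "nat \<Rightarrow> (nat \<Rightarrow> quat) \<Rightarrow> nat \<Rightarrow> real" where
  "nu3 k q m = (if m < k then Im (2 * \<i> * fst (q m) * snd (q m)) else 0)"

text \<open>z_i = zeta_i^(1/2) with 0 <= arg z_i < pi, where t i = arg zeta_i in [0, 2 pi).\<close>
definition zhalf :: "(nat \<Rightarrow> real) \<Rightarrow> nat \<Rightarrow> complex" where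
  "zhalf t i = cis (t i / 2)"

definition Wspace :: "nat \<Rightarrow> (nat \<Rightarrow> real) \<Rightarrow> (nat \<Rightarrow> real) set" where
  "Wspace k t = {w. (\<forall>i\<ge>k. w i = 0) \<and>
      (\<exists>a b. \<forall>i<k. w i = a * Re (zhalf t i) + b * Im (zhalf t i))}"

definition nu_W_tensor :: "nat \<Rightarrow> (nat \<Rightarrow> real) \<Rightarrow> (nat \<Rightarrow> quat) \<Rightarrow> bool" where
  "nu_W_tensor k t q = (\<exists>w\<in>Wspace k t. \<exists>x1 x2 x3 :: real. \<forall>m<k.
      nu1 k q m = w m * x1 \<and> nu2 k q m = w m * x2 \<and> nu3 k q m = w m * x3)"

definition vvec :: "nat \<Rightarrow> (nat \<Rightarrow> int \<times> int) \<Rightarrow> nat \<Rightarrow> int \<times> int" where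
  "vvec k u i = (if i = 0 then (fst (u 0) + fst (u (k - 1)), snd (u 0) + snd (u (k - 1)))
                 else (fst (u i) - fst (u (i - 1)), snd (u i) - snd (u (i - 1))))"

definition Omega :: "nat \<Rightarrow> (nat \<Rightarrow> int \<times> int) \<Rightarrow> (nat \<Rightarrow> real) \<Rightarrow> real \<times> real" where
  "Omega k u \<theta> = ((\<Sum>i<k. \<theta> i * real_of_int (fst (vvec k u i))),
                   (\<Sum>i<k. \<theta> i * real_of_int (snd (vvec k u i))))"

definition liealg_g :: "nat \<Rightarrow> (nat \<Rightarrow> int \<times> int) \<Rightarrow> (nat \<Rightarrow> real) set" where
  "liealg_g k u = {\<theta>. (\<forall>i\<ge>k. \<theta> i = 0) \<and> Omega k u \<theta> = (0, 0)}"

text \<open>The diagonal torus T^k (before quotienting by (-1,...,-1)).\<close>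
definition torusT :: "nat \<Rightarrow> (nat \<Rightarrow> complex) set" where
  "torusT k = {l. (\<forall>m<k. cmod (l m) = 1) \<and> (\<forall>m\<ge>k. l m = 1)}"

text \<open>The subtorus G_S = exp(g) (identity component of its preimage in the tuple group).\<close>
definition G_S :: "nat \<Rightarrow> (nat \<Rightarrow> int \<times> int) \<Rightarrow> (nat \<Rightarrow> complex) set" where
  "G_S k u = {l. \<exists>\<theta>\<in>liealg_g k u. l = (\<lambda>m. cis (\<theta> m))}"

text \<open>Stabilizer in H of the point [q] of HP^(k-1): [q l] = [q] means q_m l_m = h q_m
  for all m and some nonzero quaternion h.\<close>
definition stabHP :: "nat \<Rightarrow> (nat \<Rightarrow> quat) \<Rightarrow> (nat \<Rightarrow> complex) set \<Rightarrow> (nat \<Rightarrow> complex) set" where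
  "stabHP k q H = {l \<in> H. \<exists>h. h \<noteq> (0, 0) \<and> (\<forall>m<k. qrmul (q m) (l m) = qlmul h (q m))}"

text \<open>q in P: q nonzero and mu_R(q) = B^* o nu (q) = 0 (componentwise in Im H).\<close>
definition inP :: "nat \<Rightarrow> ((nat \<Rightarrow> real) \<Rightarrow> 'g::real_vector) \<Rightarrow> (nat \<Rightarrow> quat) \<Rightarrow> bool" where
  "inP k B q = ((\<exists>m<k. q m \<noteq> (0, 0)) \<and>
      B (nu1 k q) = 0 \<and> B (nu2 k q) = 0 \<and> B (nu3 k q) = 0)"

definition det2 :: "int \<times> int \<Rightarrow> int \<times> int \<Rightarrow> int" where
  "det2 a b = fst a * snd b - snd a * fst b"

end

theory Submission
  imports Defs
begin


definition qj :: "quat \<Rightarrow> quat" where "qj p = (- snd p, fst p)"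
definition qadd :: "quat \<Rightarrow> quat \<Rightarrow> quat" where "qadd p p' = (fst p + fst p', snd p + snd p')"
definition nq1 :: "quat \<Rightarrow> real" where "nq1 p = (cmod (fst p))\<^sup>2 - (cmod (snd p))\<^sup>2"
definition nq2 :: "quat \<Rightarrow> real" where "nq2 p = Re (2 * \<i> * fst p * snd p)"
definition nq3 :: "quat \<Rightarrow> real" where "nq3 p = Im (2 * \<i> * fst p * snd p)"

lemma Q1: "qlmul h (qrmul p c) = qrmul (qlmul h p) c"
  by (simp add: qlmul_def qrmul_def algebra_simps)
lemma Q2: "qlmul h (qadd p p') = qadd (qlmul h p) (qlmul h p')"
  by (simp add: qlmul_def qadd_def algebra_simps)
lemma Q3: "qlmul h (qj p) = qj (qlmul h p)"
  by (simp add: qlmul_def qj_def algebra_simps)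
lemma Q4: "qj (qrmul p c) = qrmul (qj p) (cnj c)"
  by (simp add: qrmul_def qj_def algebra_simps)
lemma Q10: "qrmul (qrmul p a) b = qrmul p (a * b)"
  by (simp add: qrmul_def algebra_simps)
lemma Q11: "qrmul (qadd p p') l = qadd (qrmul p l) (qrmul p' l)"
  by (simp add: qrmul_def qadd_def algebra_simps)

lemma normsq: "(complex_of_real (cmod z))\<^sup>2 = z * cnj z" for z :: complex
  by (metis complex_norm_square of_real_power)
lemma qrmul0[simp]: "qrmul x 0 = (0,0)" by (simp add: qrmul_def)
lemma qadd0[simp]: "qadd (0,0) x = x" "qadd x (0,0) = x" by (simp_all add: qadd_def)

lemma Q5:
  assumes e: "e \<noteq> (0,0)"
  shows "\<exists>c1 c2. p = qadd (qrmul e c1) (qrmul (qj e) c2)"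
proof -
  obtain x y where p: "p = (x,y)" by (cases p)
  obtain x' y' where ee: "e = (x',y')" by (cases e)
  define N where "N = x' * cnj x' + y' * cnj y'"
  have Nr: "N = complex_of_real ((cmod x')\<^sup>2 + (cmod y')\<^sup>2)"
    by (simp add: N_def normsq)
  moreover have "(cmod x')\<^sup>2 + (cmod y')\<^sup>2 \<noteq> 0" using e ee
    by (simp add: add_nonneg_eq_0_iff)
  ultimately have N0: "N \<noteq> 0" by (metis of_real_eq_0_iff)
  have cN: "cnj N = N" by (simp add: N_def)
  define c1 where "c1 = (cnj x' * x + y' * cnj y) / N"
  define c2 where "c2 = (- cnj y' * x + x' * cnj y) / N"
  have "x' * c1 - y' * c2 = (x' * (cnj x' * x + y' * cnj y) - y' * (- cnj y' * x + x' * cnj y)) / N"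
    by (simp add: c1_def c2_def diff_divide_distrib add_divide_distrib algebra_simps)
  also have "x' * (cnj x' * x + y' * cnj y) - y' * (- cnj y' * x + x' * cnj y) = x * N"
    by (simp add: N_def algebra_simps)
  finally have X: "x = x' * c1 - y' * c2" using N0 by simp
  have "y' * cnj c1 + x' * cnj c2 = (y' * (x' * cnj x + cnj y' * y) + x' * (- y' * cnj x + cnj x' * y)) / N"
    using cN by (simp add: c1_def c2_def add_divide_distrib diff_divide_distrib algebra_simps)
  also have "y' * (x' * cnj x + cnj y' * y) + x' * (- y' * cnj x + cnj x' * y) = y * N"
    by (simp add: N_def algebra_simps)
  finally have "y = y' * cnj c1 + x' * cnj c2" using N0 by simp
  with X show ?thesis
    by (intro exI[of _ c1] exI[of _ c2]) (simp add: p ee qadd_def qrmul_def qj_def)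
qed

lemma Q6:
  assumes e: "e \<noteq> (0,0)"
    and eq: "qadd (qrmul e c1) (qrmul (qj e) c2) = qadd (qrmul e d1) (qrmul (qj e) d2)"
  shows "c1 = d1 \<and> c2 = d2"
proof -
  obtain x' y' where ee: "e = (x',y')" by (cases e)
  define a where "a = c1 - d1"
  define b where "b = c2 - d2"
  from eq have h1: "x' * a - y' * b = 0" and h2: "y' * cnj a + x' * cnj b = 0"
    by (simp_all add: ee qadd_def qrmul_def qj_def a_def b_def algebra_simps)
  from h2 have h2': "cnj y' * a + cnj x' * b = 0"
    by (metis complex_cnj_add complex_cnj_cnj complex_cnj_mult complex_cnj_zero)
  have "(x' * cnj x' + y' * cnj y') * a = cnj x' * (x' * a - y' * b) + y' * (cnj y' * a + cnj x' * b)"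
    by (simp add: algebra_simps)
  also have "\<dots> = 0" using h1 h2' by simp
  finally have A: "(x' * cnj x' + y' * cnj y') * a = 0" .
  have "x' * cnj x' + y' * cnj y' = complex_of_real ((cmod x')\<^sup>2 + (cmod y')\<^sup>2)"
    by (simp add: normsq)
  moreover have "(cmod x')\<^sup>2 + (cmod y')\<^sup>2 \<noteq> 0" using e ee
    by (simp add: add_nonneg_eq_0_iff)
  ultimately have "x' * cnj x' + y' * cnj y' \<noteq> 0" by (metis of_real_eq_0_iff)
  with A have a0: "a = 0" by simp
  with h1 h2' have "y' * b = 0" "cnj x' * b = 0" by auto
  with e ee have "b = 0" by auto
  with a0 show ?thesis by (simp add: a_def b_def)
qed

lemma Q7: "p \<noteq> (0,0) \<Longrightarrow> qrmul p l = qrmul p l' \<Longrightarrow> l = l'"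
  by (cases p) (auto simp: qrmul_def)

lemma ReofR: "Re (complex_of_real r * z) = r * Re z" by simp
lemma ImofR: "Im (complex_of_real r * z) = r * Im z" by simp
lemma Q8: "nq1 (qrmul p c) = (cmod c)\<^sup>2 * nq1 p" "nq2 (qrmul p c) = (cmod c)\<^sup>2 * nq2 p"
  "nq3 (qrmul p c) = (cmod c)\<^sup>2 * nq3 p"
proof -
  show "nq1 (qrmul p c) = (cmod c)\<^sup>2 * nq1 p"
    by (simp add: nq1_def qrmul_def norm_mult power_mult_distrib algebra_simps)
  have E: "2 * \<i> * fst (qrmul p c) * snd (qrmul p c) = complex_of_real ((cmod c)\<^sup>2) * (2 * \<i> * fst p * snd p)"
    by (simp add: qrmul_def normsq algebra_simps)
  have "nq2 (qrmul p c) = Re (complex_of_real ((cmod c)\<^sup>2) * (2 * \<i> * fst p * snd p))"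
    by (simp only: nq2_def E)
  then show "nq2 (qrmul p c) = (cmod c)\<^sup>2 * nq2 p" by (simp only: ReofR nq2_def)
  have "nq3 (qrmul p c) = Im (complex_of_real ((cmod c)\<^sup>2) * (2 * \<i> * fst p * snd p))"
    by (simp only: nq3_def E)
  then show "nq3 (qrmul p c) = (cmod c)\<^sup>2 * nq3 p" by (simp only: ImofR nq3_def)
qed

lemma Q8j: "nq1 (qj p) = - nq1 p" "nq2 (qj p) = - nq2 p" "nq3 (qj p) = - nq3 p"
  by (simp_all add: nq1_def nq2_def nq3_def qj_def)

lemma Q9: assumes "nq1 p = 0" "nq2 p = 0" "nq3 p = 0" shows "p = (0,0)"
proof -
  have "2 * \<i> * fst p * snd p = 0" using assms(2,3) unfolding nq2_def nq3_def
    by (simp add: complex_eq_iff)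
  hence "fst p = 0 \<or> snd p = 0" by simp
  with assms(1) show ?thesis unfolding nq1_def by (cases p) auto
qed

lemma core:
  assumes e: "e \<noteq> (0,0)" and p: "p \<noteq> (0,0)"
    and he: "qlmul h e = qrmul e l0" and hp: "qlmul h p = qrmul p l"
  shows "(l = l0 \<and> l = cnj l0) \<or> (l = l0 \<and> (\<exists>c. c \<noteq> 0 \<and> p = qrmul e c))
      \<or> (l = cnj l0 \<and> (\<exists>c. c \<noteq> 0 \<and> p = qrmul (qj e) c))"
proof -
  obtain c1 c2 where pc: "p = qadd (qrmul e c1) (qrmul (qj e) c2)" using Q5[OF e] by blast
  have "qlmul h p = qadd (qrmul e (l0 * c1)) (qrmul (qj e) (cnj l0 * c2))"
    unfolding pc Q2 Q1 Q3 he Q4 Q10 ..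
  moreover have "qrmul p l = qadd (qrmul e (c1 * l)) (qrmul (qj e) (c2 * l))"
    unfolding pc Q11 Q10 ..
  ultimately have "l0 * c1 = c1 * l \<and> cnj l0 * c2 = c2 * l"
    using Q6[OF e] hp by metis
  hence E1: "c1 = 0 \<or> l = l0" and E2: "c2 = 0 \<or> l = cnj l0" by auto
  show ?thesis
  proof (cases "c1 = 0")
    case True
    then have "c2 \<noteq> 0" using p pc by auto
    then show ?thesis using E2 True pc by auto
  next
    case False
    show ?thesis
    proof (cases "c2 = 0")
      case True then show ?thesis using E1 False pc by auto
    next
      case c2: False then show ?thesis using E1 E2 False by auto
    qed
  qed
qed



lemma nu_eq: "m < k \<Longrightarrow> nu1 k q m = nq1 (q m)" "m < k \<Longrightarrow> nu2 k q m = nq2 (q m)"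
  "m < k \<Longrightarrow> nu3 k q m = nq3 (q m)"
  by (simp_all add: nu1_def nu2_def nu3_def nq1_def nq2_def nq3_def)

lemma nu_out: "nu1 k q m \<noteq> 0 \<Longrightarrow> m < k" "nu2 k q m \<noteq> 0 \<Longrightarrow> m < k" "nu3 k q m \<noteq> 0 \<Longrightarrow> m < k"
  by (auto simp: nu1_def nu2_def nu3_def split: if_splits)

lemma W_scale: "w \<in> Wspace k t \<Longrightarrow> (\<lambda>m. c * w m) \<in> Wspace k t"
proof -
  assume "w \<in> Wspace k t"
  then obtain a b where "\<forall>i\<ge>k. w i = 0" "\<forall>i<k. w i = a * Re (zhalf t i) + b * Im (zhalf t i)"
    unfolding Wspace_def by blast
  moreover have "\<forall>i<k. c * w i = (c*a) * Re (zhalf t i) + (c*b) * Im (zhalf t i)"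
    using calculation by (simp add: algebra_simps)
  ultimately show ?thesis unfolding Wspace_def by auto
qed

lemma tensor_par:
  assumes W: "N1 \<in> Wspace k t" "N2 \<in> Wspace k t" "N3 \<in> Wspace k t"
    and X: "X1 \<noteq> 0 \<or> X2 \<noteq> 0 \<or> X3 \<noteq> 0"
    and par: "\<forall>m<k. \<exists>r. N1 m = r * X1 \<and> N2 m = r * X2 \<and> N3 m = r * X3"
  shows "\<exists>w\<in>Wspace k t. \<exists>x1 x2 x3 :: real. \<forall>m<k. N1 m = w m * x1 \<and> N2 m = w m * x2 \<and> N3 m = w m * x3"
proof -
  { fix N :: "nat \<Rightarrow> real" and X :: real
    assume N: "N \<in> Wspace k t" and X0: "X \<noteq> 0" and p: "\<forall>m<k. \<exists>r. N m = r * X \<and> N1 m = r * X1 \<and> N2 m = r * X2 \<and> N3 m = r * X3"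
    have "(\<lambda>m. (1/X) * N m) \<in> Wspace k t" using W_scale[OF N] .
    moreover have "\<forall>m<k. N1 m = (1/X) * N m * X1 \<and> N2 m = (1/X) * N m * X2 \<and> N3 m = (1/X) * N m * X3"
      using p X0 by force
    ultimately have ?thesis
      apply - apply (rule bexI[of _ "\<lambda>m. 1/X * N m"]) apply (rule exI[of _ X1], rule exI[of _ X2], rule exI[of _ X3])
      apply assumption+ done }
  note gen = this
  show ?thesis using X
  proof (elim disjE)
    assume "X1 \<noteq> 0" then show ?thesis using gen[OF W(1)] par by blast
  next
    assume "X2 \<noteq> 0" then show ?thesis using gen[OF W(2)] par by blast
  next
    assume "X3 \<noteq> 0" then show ?thesis using gen[OF W(3)] par by blast
  qed
qed

lemma tensor_zero:
  assumes W: "N1 \<in> Wspace k t" "N2 \<in> Wspace k t" "N3 \<in> Wspace k t"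
    and m0: "m0 < k" "N1 m0 = 0" "N2 m0 = 0" "N3 m0 = 0"
  shows "\<exists>w\<in>Wspace k t. \<exists>x1 x2 x3 :: real. \<forall>m<k. N1 m = w m * x1 \<and> N2 m = w m * x2 \<and> N3 m = w m * x3"
proof -
  define c where "c = cos (t m0 / 2)"
  define s where "s = sin (t m0 / 2)"
  have cs: "c \<noteq> 0 \<or> s \<noteq> 0"
  proof (rule ccontr)
    assume "\<not> (c \<noteq> 0 \<or> s \<noteq> 0)"
    hence "c = 0" "s = 0" by auto
    with sin_cos_squared_add[of "t m0 / 2"] show False unfolding c_def s_def by simp
  qed
  define w where "w = (\<lambda>i. if i < k then - s * cos (t i / 2) + c * sin (t i / 2) else 0)"
  have "\<forall>i<k. w i = (-s) * Re (zhalf t i) + c * Im (zhalf t i)" unfolding w_def zhalf_def by simp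
  moreover have "\<forall>i\<ge>k. w i = 0" unfolding w_def by simp
  ultimately have wW: "w \<in> Wspace k t" unfolding Wspace_def by blast
  { fix N assume N: "N \<in> Wspace k t" and N0: "N m0 = 0"
    then obtain a b where ab: "\<forall>i<k. N i = a * cos (t i / 2) + b * sin (t i / 2)"
      unfolding Wspace_def zhalf_def by auto
    have z: "a * c + b * s = 0" using ab m0(1) N0 unfolding c_def s_def by auto
    define x where "x = (if c \<noteq> 0 then b / c else - a / s)"
    have "\<forall>m<k. N m = w m * x"
    proof (intro allI impI)
      fix m assume m: "m < k"
      show "N m = w m * x"
      proof (cases "c = 0")
        case True
        with cs have "s \<noteq> 0" by auto
        with True z have "b = 0" by simp
        with True \<open>s \<noteq> 0\<close> show ?thesis using ab m unfolding w_def x_def by (simp add: field_simps)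
      next
        case False
        have "w m * x = (- s * cos (t m / 2) + c * sin (t m / 2)) * (b / c)" by (simp add: w_def x_def m False)
        also have "\<dots> = (- (b * s) / c) * cos (t m / 2) + b * sin (t m / 2)" using False by (simp add: field_simps)
        also have "- (b * s) / c = a" using z False by (simp add: field_simps)
        finally show ?thesis using ab m by simp
      qed
    qed
    hence "\<exists>x. \<forall>m<k. N m = w m * x" by blast }
  note one = this
  obtain x1 where "\<forall>m<k. N1 m = w m * x1" using one[OF W(1) m0(2)] by blast
  moreover obtain x2 where "\<forall>m<k. N2 m = w m * x2" using one[OF W(2) m0(3)] by blast
  moreover obtain x3 where "\<forall>m<k. N3 m = w m * x3" using one[OF W(3) m0(4)] by blast
  ultimately show ?thesis using wW by blast
qed

lemma nuW:
  assumes B_ker: "\<forall>w. (\<forall>i\<ge>k. w i = 0) \<longrightarrow> (B w = 0 \<longleftrightarrow> w \<in> Wspace k t)"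
    and P: "inP k B q"
  shows "nu1 k q \<in> Wspace k t" "nu2 k q \<in> Wspace k t" "nu3 k q \<in> Wspace k t"
proof -
  have z: "\<forall>i\<ge>k. nu1 k q i = 0" "\<forall>i\<ge>k. nu2 k q i = 0" "\<forall>i\<ge>k. nu3 k q i = 0"
    by (auto simp: nu1_def nu2_def nu3_def)
  from P have "B (nu1 k q) = 0" "B (nu2 k q) = 0" "B (nu3 k q) = 0" unfolding inP_def by auto
  with z B_ker show "nu1 k q \<in> Wspace k t" "nu2 k q \<in> Wspace k t" "nu3 k q \<in> Wspace k t" by blast+
qed

lemma unit_real: "Im z = 0 \<Longrightarrow> cmod z = 1 \<Longrightarrow> z = 1 \<or> z = -1"
proof -
  assume a: "Im z = 0" "cmod z = 1"
  hence "\<bar>Re z\<bar> = 1" by (simp add: cmod_eq_Re)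
  thus ?thesis using a by (auto simp: complex_eq_iff abs_if split: if_splits)
qed

lemma part1:
  assumes B_ker: "\<forall>w. (\<forall>i\<ge>k. w i = 0) \<longrightarrow> (B w = 0 \<longleftrightarrow> w \<in> Wspace k t)"
    and P: "inP k B q" and NT: "\<not> nu_W_tensor k t q"
  shows "finite (stabHP k q (torusT k))"
proof -
  note W = nuW[OF B_ker P]
  have nz: "q m \<noteq> (0,0)" if "m < k" for m
  proof
    assume "q m = (0,0)"
    hence "nu1 k q m = 0" "nu2 k q m = 0" "nu3 k q m = 0" using that
      by (simp_all add: nu_eq nq1_def nq2_def nq3_def)
    from tensor_zero[OF W that this] NT show False unfolding nu_W_tensor_def by blast
  qed
  obtain m0 where m0: "m0 < k" using P unfolding inP_def by blast
  define e where "e = q m0"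
  have e0: "e \<noteq> (0,0)" using nz m0 e_def by auto
  have eX: "nq1 e \<noteq> 0 \<or> nq2 e \<noteq> 0 \<or> nq3 e \<noteq> 0" using Q9 e0 by blast
  have sub: "stabHP k q (torusT k) \<subseteq> (\<lambda>c. \<lambda>m. if m < k then c else 1) ` {1, -1}"
  proof
    fix l assume l: "l \<in> stabHP k q (torusT k)"
    then obtain h where hq: "\<forall>m<k. qrmul (q m) (l m) = qlmul h (q m)"
      and lT: "l \<in> torusT k" unfolding stabHP_def by blast
    define l0 where "l0 = l m0"
    have he: "qlmul h e = qrmul e l0" using hq m0 unfolding e_def l0_def by simp
    have C: "(l m = l0 \<and> l m = cnj l0) \<or> (l m = l0 \<and> (\<exists>c. c \<noteq> 0 \<and> q m = qrmul e c))
      \<or> (l m = cnj l0 \<and> (\<exists>c. c \<noteq> 0 \<and> q m = qrmul (qj e) c))" if m: "m < k" for m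
      using core[OF e0 nz[OF m] he hq[rule_format, OF m, symmetric]] .
    have real: "l0 = cnj l0"
    proof (rule ccontr)
      assume ne: "l0 \<noteq> cnj l0"
      have "\<forall>m<k. \<exists>r. nu1 k q m = r * nq1 e \<and> nu2 k q m = r * nq2 e \<and> nu3 k q m = r * nq3 e"
      proof (intro allI impI)
        fix m assume m: "m < k"
        from C[OF m] ne show "\<exists>r. nu1 k q m = r * nq1 e \<and> nu2 k q m = r * nq2 e \<and> nu3 k q m = r * nq3 e"
        proof (elim disjE conjE exE)
          fix c assume "q m = qrmul e c" then show ?thesis using m
            by (intro exI[of _ "(cmod c)\<^sup>2"]) (simp add: nu_eq Q8)
        next
          fix c assume "q m = qrmul (qj e) c" then show ?thesis using m
            by (intro exI[of _ "- (cmod c)\<^sup>2"]) (simp add: nu_eq Q8 Q8j)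
        qed auto
      qed
      from tensor_par[OF W eX this] NT show False unfolding nu_W_tensor_def by blast
    qed
    have all: "\<forall>m<k. l m = l0"
    proof (intro allI impI)
      fix m assume m: "m < k"
      from C[OF m] real show "l m = l0" by auto
    qed
    have n1: "cmod l0 = 1" using lT m0 unfolding torusT_def l0_def by auto
    have "Im l0 = 0" using real by (simp add: complex_eq_iff)
    hence "l0 = 1 \<or> l0 = -1" using n1 by (rule unit_real)
    moreover have "l = (\<lambda>m. if m < k then l0 else 1)"
    proof (rule ext)
      fix m show "l m = (if m < k then l0 else 1)" using all lT unfolding torusT_def by (cases "m < k") auto
    qed
    ultimately show "l \<in> (\<lambda>c. \<lambda>m. if m < k then c else 1) ` {1, -1}" by auto
  qed
  show ?thesis by (rule finite_subset[OF sub]) auto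
qed



definition sg :: "real \<Rightarrow> int" where
  "sg x = (if x > 0 then 1 else if x < 0 then -1 else 0)"

lemma sg_comb: "a > 0 \<Longrightarrow> b > 0 \<Longrightarrow> sg x = sg y \<Longrightarrow> sg (a * x + b * y) = sg x"
proof -
  assume ab: "a > 0" "b > 0" and e: "sg x = sg y"
  consider "x > 0" "y > 0" | "x < 0" "y < 0" | "x = 0" "y = 0"
    using e by (auto simp: sg_def split: if_splits)
  then show ?thesis
  proof cases
    case 1 then have "a * x + b * y > 0" using ab by (simp add: add_pos_pos)
    then show ?thesis using 1 by (simp add: sg_def)
  next
    case 2 then have "a * x + b * y < 0" using ab by (simp add: add_neg_neg mult_pos_neg)
    then show ?thesis using 2 by (simp add: sg_def)
  qed simp
qed

lemma sg_scale: "a > 0 \<Longrightarrow> sg (a * x) = sg x"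
  by (auto simp: sg_def zero_less_mult_iff mult_less_0_iff)

lemma sg_opp: "a > 0 \<Longrightarrow> b > 0 \<Longrightarrow> x \<noteq> 0 \<Longrightarrow> y \<noteq> 0 \<Longrightarrow> a * x + b * y = 0 \<Longrightarrow> sg x = - sg y"
proof -
  assume ab: "a > 0" "b > 0" "x \<noteq> 0" "y \<noteq> 0" "a * x + b * y = 0"
  hence "a * x = - (b * y)" by simp
  hence "sg (a * x) = sg (- (b * y))" by simp
  moreover have "sg (- (b * y)) = - sg (b * y)" by (auto simp: sg_def)
  ultimately show ?thesis using sg_scale ab by metis
qed

lemma sg_cases: "sg x = 1 \<or> sg x = -1 \<or> sg x = 0" by (simp add: sg_def)
lemma sg_0_iff: "sg x = 0 \<longleftrightarrow> x = 0" by (simp add: sg_def)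

lemma trig1: "sin (z - x) * cos y = sin (z - y) * cos x + sin (y - x) * cos z" for x y z :: real
  by (simp add: sin_diff algebra_simps)
lemma trig2: "sin (z - x) * sin y = sin (z - y) * sin x + sin (y - x) * sin z" for x y z :: real
  by (simp add: sin_diff algebra_simps)

lemma cis_sum: "(\<Prod>i\<in>A. cis (f i)) = cis (\<Sum>i\<in>A. f i)"
  by (induction A rule: infinite_finite_induct) (auto simp: cis_mult)

lemma powi_sum: "(z::complex) \<noteq> 0 \<Longrightarrow> (\<Prod>i\<in>A. z powi (g i)) = z powi (\<Sum>i\<in>A. g i)"
  by (induction A rule: infinite_finite_induct) (auto simp: power_int_add)

lemma powi_root: assumes "(z::complex) powi d = 1" "d \<noteq> 0" shows "z ^ nat \<bar>d\<bar> = 1"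
proof (cases "d \<ge> 0")
  case True then show ?thesis using assms by (simp add: power_int_def)
next
  case False
  then have "inverse z ^ nat (- d) = 1" using assms by (simp add: power_int_def)
  then show ?thesis using False by (simp add: power_inverse)
qed

definition vv :: "nat \<Rightarrow> (nat \<Rightarrow> int) \<Rightarrow> nat \<Rightarrow> int" where
  "vv k f i = (if i = 0 then f 0 + f (k - 1) else f i - f (i - 1))"

lemma vvec_fst: "fst (vvec k u i) = vv k (\<lambda>i. fst (u i)) i"
  and vvec_snd: "snd (vvec k u i) = vv k (\<lambda>i. snd (u i)) i"
  by (simp_all add: vvec_def vv_def)

lemma tele: "(\<Sum>i<Suc n. vv k f i) = f (k - 1) + f n"
  by (induction n) (auto simp: vv_def)

lemma PS: "n \<le> k \<Longrightarrow> (\<Sum>i<k. (if i < n then 1 else 0) * vv k f i) = (if n = 0 then 0 else f (k - 1) + f (n - 1))"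
proof -
  assume n: "n \<le> k"
  have "(\<Sum>i<k. (if i < n then 1 else 0) * vv k f i) = (\<Sum>i<k. if i \<in> {..<n} then vv k f i else 0)"
    by (rule sum.cong) auto
  also have "\<dots> = (\<Sum>i\<in>{..<k} \<inter> {..<n}. vv k f i)"
    by (simp add: sum.inter_restrict)
  also have "{..<k} \<inter> {..<n} = {..<n}" using n by auto
  finally show ?thesis using tele[where n="n - 1" and k=k and f=f] by (cases n) auto
qed

lemma sum_full: "0 < k \<Longrightarrow> (\<Sum>i<k. vv k f i) = 2 * f (k - 1)"
  using PS[where n=k and k=k and f=f] by simp



lemma elim2:
  fixes \<beta> \<gamma> :: complex
  assumes nz: "\<beta> \<noteq> 0" "\<gamma> \<noteq> 0"
    and e1: "\<beta> powi a1 * \<gamma> powi b1 = 1" and e2: "\<beta> powi a2 * \<gamma> powi b2 = 1"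
  shows "\<beta> powi (a1 * b2 - a2 * b1) = 1 \<and> \<gamma> powi (a1 * b2 - a2 * b1) = 1"
proof -
  have X: "\<beta> powi (a1 * b2) * \<gamma> powi (b1 * b2) = 1"
    using arg_cong[OF e1, of "\<lambda>z. z powi b2"] by (simp add: power_int_mult_distrib power_int_mult)
  have Y: "\<beta> powi (a2 * b1) * \<gamma> powi (b1 * b2) = 1"
    using arg_cong[OF e2, of "\<lambda>z. z powi b1"] by (simp add: power_int_mult_distrib mult.commute flip: power_int_mult)
  have g0: "\<gamma> powi (b1 * b2) \<noteq> 0" using nz by simp
  from X Y g0 have "\<beta> powi (a1 * b2) = \<beta> powi (a2 * b1)" by (metis mult_right_cancel)
  hence r1: "\<beta> powi (a1 * b2 - a2 * b1) = 1" using nz by (simp add: power_int_diff)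
  have X': "\<beta> powi (a1 * a2) * \<gamma> powi (b1 * a2) = 1"
    using arg_cong[OF e1, of "\<lambda>z. z powi a2"] by (simp add: power_int_mult_distrib power_int_mult)
  have Y': "\<beta> powi (a1 * a2) * \<gamma> powi (b2 * a1) = 1"
    using arg_cong[OF e2, of "\<lambda>z. z powi a1"] by (simp add: power_int_mult_distrib mult.commute flip: power_int_mult)
  have b0: "\<beta> powi (a1 * a2) \<noteq> 0" using nz by simp
  from X' Y' b0 have "\<gamma> powi (b1 * a2) = \<gamma> powi (b2 * a1)" by (metis mult_left_cancel)
  hence "\<gamma> powi (a1 * b2 - a2 * b1) = 1" using nz by (simp add: power_int_diff mult.commute)
  with r1 show ?thesis by simp
qed

lemma prod_lemma:
  assumes th: "\<theta> \<in> liealg_g k u"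
  shows "(\<Prod>i<k. cis (\<theta> i) powi fst (vvec k u i)) = 1"
    "(\<Prod>i<k. cis (\<theta> i) powi snd (vvec k u i)) = 1"
proof -
  from th have O: "Omega k u \<theta> = (0,0)" unfolding liealg_g_def by blast
  have "(\<Prod>i<k. cis (\<theta> i) powi fst (vvec k u i)) = cis (\<Sum>i<k. \<theta> i * real_of_int (fst (vvec k u i)))"
    by (simp add: cis_power_int cis_sum mult.commute)
  also have "\<dots> = 1" using O by (simp add: Omega_def)
  finally show "(\<Prod>i<k. cis (\<theta> i) powi fst (vvec k u i)) = 1" .
  have "(\<Prod>i<k. cis (\<theta> i) powi snd (vvec k u i)) = cis (\<Sum>i<k. \<theta> i * real_of_int (snd (vvec k u i)))"
    by (simp add: cis_power_int cis_sum mult.commute)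
  also have "\<dots> = 1" using O by (simp add: Omega_def)
  finally show "(\<Prod>i<k. cis (\<theta> i) powi snd (vvec k u i)) = 1" .
qed



lemma LF:
  assumes k2: "2 \<le> k"
    and cyc_indep: "\<forall>i<k. det2 (u i) (u ((i + 1) mod k)) \<noteq> 0"
    and halfplane: "\<forall>i<k. (fst (u i) > 0 \<and> snd (u i) = 0) \<or> snd (u i) > 0"
    and convex: "\<forall>i. i + 1 < k \<longrightarrow> det2 (u i) (u (i + 1)) > 0"
    and trange: "\<forall>i<k. 0 \<le> t i \<and> t i < 2 * pi"
    and tmono: "\<forall>i j. i < j \<and> j < k \<longrightarrow> t i < t j"
    and wW: "w \<in> Wspace k t" and m0: "m0 < k" "w m0 \<noteq> 0"
  shows "finite {l. (\<exists>\<theta>\<in>liealg_g k u. l = (\<lambda>m. cis (\<theta> m))) \<and>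
                    (\<exists>\<beta>. \<beta> \<noteq> 0 \<and> (\<forall>m<k. w m \<noteq> 0 \<longrightarrow> l m = \<beta> powi sg (w m)))}"
    (is "finite ?L")
proof -
  obtain A Bc where AB: "\<forall>i<k. w i = A * cos (t i / 2) + Bc * sin (t i / 2)"
    using wW unfolding Wspace_def zhalf_def by auto
  have between: "\<exists>a b. a > 0 \<and> b > 0 \<and> w j = a * w i + b * w l"
    if ij: "i < j" and jl: "j < l" and lk: "l < k" for i j l
  proof -
    define x where "x = t i / 2"
    define y where "y = t j / 2"
    define z where "z = t l / 2"
    have xy: "x < y" and yz: "y < z" using tmono ij jl lk unfolding x_def y_def z_def by auto
    have x0: "0 \<le> x" and zp: "z < pi" using trange ij jl lk unfolding x_def z_def by auto
    define S where "S = sin (z - x)"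
    have S0: "S > 0" unfolding S_def using xy yz x0 zp by (intro sin_gt_zero) auto
    have s1: "sin (z - y) > 0" using xy yz x0 zp by (intro sin_gt_zero) auto
    have s2: "sin (y - x) > 0" using xy yz x0 zp by (intro sin_gt_zero) auto
    have wi: "w i = A * cos x + Bc * sin x" using AB ij jl lk unfolding x_def by auto
    have wj: "w j = A * cos y + Bc * sin y" using AB ij jl lk unfolding y_def by auto
    have wl: "w l = A * cos z + Bc * sin z" using AB ij jl lk unfolding z_def by auto
    have "S * w j = A * (S * cos y) + Bc * (S * sin y)" using wj by (simp add: algebra_simps)
    also have "\<dots> = A * (sin (z - y) * cos x + sin (y - x) * cos z) + Bc * (sin (z - y) * sin x + sin (y - x) * sin z)"
      unfolding S_def trig1[where x=x and y=y and z=z] trig2[where x=x and y=y and z=z] ..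
    also have "\<dots> = sin (z - y) * w i + sin (y - x) * w l" using wi wl by (simp add: algebra_simps)
    finally have "w j = (sin (z - y) / S) * w i + (sin (y - x) / S) * w l" using S0
      by (simp add: field_simps)
    then show ?thesis using S0 s1 s2 by (intro exI[of _ "sin (z - y) / S"] exI[of _ "sin (y - x) / S"]) auto
  qed
  have uniq_lt: False if ij: "i < j" and jk: "j < k" and wi: "w i = 0" and wj: "w j = 0" for i j
  proof -
    define x where "x = t i / 2"
    define y where "y = t j / 2"
    have xy: "x < y" using tmono ij jk unfolding x_def y_def by auto
    have x0: "0 \<le> x" and yp: "y < pi" using trange ij jk unfolding x_def y_def by auto
    have S0: "sin (y - x) > 0" using xy x0 yp by (intro sin_gt_zero) auto
    have e1: "A * cos x + Bc * sin x = 0" using AB wi ij jk unfolding x_def by auto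
    have e2: "A * cos y + Bc * sin y = 0" using AB wj jk unfolding y_def by auto
    have "A * sin (y - x) = sin y * (A * cos x + Bc * sin x) - sin x * (A * cos y + Bc * sin y)"
      by (simp add: sin_diff algebra_simps)
    hence "A * sin (y - x) = 0" using e1 e2 by simp
    hence A0: "A = 0" using S0 by simp
    have "Bc * sin (y - x) = cos x * (A * cos y + Bc * sin y) - cos y * (A * cos x + Bc * sin x)"
      by (simp add: sin_diff algebra_simps)
    hence "Bc * sin (y - x) = 0" using e1 e2 by simp
    hence B0: "Bc = 0" using S0 by simp
    show False using AB m0 A0 B0 by auto
  qed
  have uniq: "i = j" if "i < k" "j < k" "w i = 0" "w j = 0" for i j
    using uniq_lt[of i j] uniq_lt[of j i] that by (cases i j rule: linorder_cases) auto
  have k0: "0 < k" using k2 by simp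
  have prodE: "(\<Prod>i<k. l i powi fst (vvec k u i)) = 1 \<and> (\<Prod>i<k. l i powi snd (vvec k u i)) = 1"
    if "l \<in> ?L" for l
  proof -
    from that obtain \<theta> where th: "\<theta> \<in> liealg_g k u" and l: "l = (\<lambda>m. cis (\<theta> m))" by blast
    show ?thesis using prod_lemma[OF th] l by simp
  qed
  have lout: "l m = 1" if "l \<in> ?L" "\<not> m < k" for l m
  proof -
    from that obtain \<theta> where th: "\<theta> \<in> liealg_g k u" and l: "l = (\<lambda>m. cis (\<theta> m))" by blast
    show ?thesis using th that(2) l unfolding liealg_g_def by auto
  qed
  have lnz: "l m \<noteq> 0" if "l \<in> ?L" for l m
  proof -
    from that obtain \<theta> where l: "l = (\<lambda>m. cis (\<theta> m))" by blast
    show ?thesis using l by simp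
  qed
  show ?thesis
  proof (cases "\<exists>m1<k. w m1 = 0")
    case False
    define s where "s = sg (w 0)"
    define J where "J = {i. i < k \<and> sg (w i) = s}"
    have fJ: "finite J" "0 \<in> J" unfolding J_def s_def using k0 by auto
    define j where "j = Max J"
    have jJ: "j \<in> J" using fJ unfolding j_def by (intro Max_in) auto
    have jk: "j < k" using jJ unfolding J_def by auto
    have s1: "s = 1 \<or> s = -1" using False k0 sg_cases[of "w 0"] sg_0_iff[of "w 0"] unfolding s_def by auto
    have eps: "sg (w i) = 2 * s * (if i < Suc j then 1 else 0) - s" if ik: "i < k" for i
    proof (cases "i < Suc j")
      case True
      have "sg (w i) = s"
      proof (cases "i = 0 \<or> i = j")
        case True then show ?thesis using jJ unfolding J_def s_def by auto
      next
        case False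
        with \<open>i < Suc j\<close> have "0 < i" "i < j" by auto
        then obtain a b where ab: "a > 0" "b > 0" "w i = a * w 0 + b * w j"
          using between[of 0 i j] jk by auto
        have "sg (w 0) = sg (w j)" using jJ unfolding J_def s_def by auto
        then show ?thesis using sg_comb[OF ab(1,2)] ab(3) unfolding s_def by simp
      qed
      then show ?thesis using True by simp
    next
      case nt: False
      have "i \<notin> J" using nt Max_ge[OF fJ(1), of i] unfolding j_def by auto
      hence "sg (w i) \<noteq> s" using ik unfolding J_def by auto
      moreover have "sg (w i) \<noteq> 0" using False ik sg_0_iff by auto
      ultimately have "sg (w i) = - s" using s1 sg_cases[of "w i"] by auto
      then show ?thesis using nt by simp
    qed
    have Dsum: "(\<Sum>i<k. sg (w i) * vv k f i) = 2 * s * f j" for f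
    proof -
      have "(\<Sum>i<k. sg (w i) * vv k f i) = (\<Sum>i<k. (2 * s) * ((if i < Suc j then 1 else 0) * vv k f i) - s * vv k f i)"
        by (rule sum.cong) (auto simp: eps algebra_simps)
      also have "\<dots> = 2 * s * (\<Sum>i<k. (if i < Suc j then 1 else 0) * vv k f i) - s * (\<Sum>i<k. vv k f i)"
        by (simp add: sum_subtractf sum_distrib_left)
      also have "\<dots> = 2 * s * f j" using PS[where n="Suc j" and k=k and f=f] sum_full[OF k0, of f] jk
        by (simp add: algebra_simps)
      finally show ?thesis .
    qed
    define c where "c = (if fst (u j) \<noteq> 0 then fst (u j) else snd (u j))"
    have c0: "c \<noteq> 0" using halfplane jk unfolding c_def by auto
    define n where "n = nat \<bar>2 * s * c\<bar>"
    have n1: "1 \<le> n" unfolding n_def using c0 s1 by auto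
    have sub: "?L \<subseteq> (\<lambda>\<beta>. \<lambda>m. if m < k then \<beta> powi sg (w m) else 1) ` {\<beta>. \<beta> ^ n = 1}"
    proof
      fix l assume lL: "l \<in> ?L"
      then obtain \<beta> where b0: "\<beta> \<noteq> 0" and lb: "\<forall>m<k. w m \<noteq> 0 \<longrightarrow> l m = \<beta> powi sg (w m)" by blast
      have lb': "\<forall>m<k. l m = \<beta> powi sg (w m)" using lb False by auto
      have P: "(\<Prod>i<k. l i powi g i) = \<beta> powi (\<Sum>i<k. sg (w i) * g i)" for g
      proof -
        have "(\<Prod>i<k. l i powi g i) = (\<Prod>i<k. \<beta> powi (sg (w i) * g i))"
          by (rule prod.cong) (auto simp: lb' power_int_mult)
        also have "\<dots> = \<beta> powi (\<Sum>i<k. sg (w i) * g i)" by (rule powi_sum[OF b0])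
        finally show ?thesis .
      qed
      have "\<beta> powi (2 * s * c) = 1"
      proof (cases "fst (u j) \<noteq> 0")
        case True
        have "\<beta> powi (\<Sum>i<k. sg (w i) * vv k (\<lambda>i. fst (u i)) i) = 1"
          using prodE[OF lL] P[of "\<lambda>i. fst (vvec k u i)"] by (simp add: vvec_fst)
        then show ?thesis using True Dsum unfolding c_def by simp
      next
        case f: False
        have "\<beta> powi (\<Sum>i<k. sg (w i) * vv k (\<lambda>i. snd (u i)) i) = 1"
          using prodE[OF lL] P[of "\<lambda>i. snd (vvec k u i)"] by (simp add: vvec_snd)
        then show ?thesis using f Dsum unfolding c_def by simp
      qed
      moreover have "2 * s * c \<noteq> 0" using c0 s1 by auto
      ultimately have "\<beta> ^ n = 1" unfolding n_def by (rule powi_root)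
      moreover have "l = (\<lambda>m. if m < k then \<beta> powi sg (w m) else 1)"
        using lb' lout[OF lL] by (intro ext) auto
      ultimately show "l \<in> (\<lambda>\<beta>. \<lambda>m. if m < k then \<beta> powi sg (w m) else 1) ` {\<beta>. \<beta> ^ n = 1}" by blast
    qed
    show ?thesis by (rule finite_subset[OF sub]) (intro finite_imageI finite_roots_unity n1)
  next
    case True
    then obtain m1 where m1: "m1 < k" "w m1 = 0" by blast
    have nz: "w i \<noteq> 0" if "i < k" "i \<noteq> m1" for i using uniq[of i m1] that m1 by auto
    define s where "s = (if 0 < m1 then sg (w 0) else - sg (w (k - 1)))"
    have s1: "s = 1 \<or> s = -1"
    proof (cases "0 < m1")
      case True
      then have "w 0 \<noteq> 0" using nz k0 by auto
      then show ?thesis using True sg_cases[of "w 0"] sg_0_iff[of "w 0"] unfolding s_def by auto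
    next
      case False
      then have "w (k - 1) \<noteq> 0" using nz k2 by auto
      then show ?thesis using False sg_cases[of "w (k - 1)"] sg_0_iff[of "w (k - 1)"] unfolding s_def by auto
    qed
    have eps0: "sg (w i) = (if i < m1 then s else if i = m1 then 0 else - s)" if ik: "i < k" for i
    proof -
      consider (lt) "i < m1" | (eq) "i = m1" | (gt) "m1 < i" by (rule linorder_cases)
      then show ?thesis
      proof cases
        case lt
        then have p: "0 < m1" by simp
        have "sg (w i) = sg (w 0)"
        proof (cases "i = 0")
          case True then show ?thesis by simp
        next
          case False
          then have i0: "0 < i" by simp
          obtain a b where ab: "a > 0" "b > 0" "w i = a * w 0 + b * w m1"
            using between[OF i0 lt m1(1)] by blast
          have "w i = a * w 0" using ab(3) m1(2) by simp
          then show ?thesis using sg_scale[OF ab(1), of "w 0"] by simp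
        qed
        then show ?thesis using lt p unfolding s_def by simp
      next
        case eq then show ?thesis using m1(2) by (simp add: sg_def)
      next
        case gt
        show ?thesis
        proof (cases "0 < m1")
          case True
          obtain a b where ab: "a > 0" "b > 0" "w m1 = a * w 0 + b * w i"
            using between[OF True gt ik] by blast
          have w0: "w 0 \<noteq> 0" using nz[of 0] k0 True by simp
          have wi: "w i \<noteq> 0" using nz[of i] ik gt by simp
          have "sg (w 0) = - sg (w i)"
            by (rule sg_opp[OF ab(1,2) w0 wi]) (use ab(3) m1(2) in simp)
          then show ?thesis using gt True unfolding s_def by simp
        next
          case False
          hence m10: "m1 = 0" by simp
          have "sg (w i) = sg (w (k - 1))"
          proof (cases "i = k - 1")
            case True then show ?thesis by simp
          next
            case False
            hence ik1: "i < k - 1" using ik by linarith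
            have i0: "0 < i" using gt m10 by simp
            have k1: "k - 1 < k" using k0 by simp
            obtain a b where ab: "a > 0" "b > 0" "w i = a * w 0 + b * w (k - 1)"
              using between[OF i0 ik1 k1] by blast
            have "w i = b * w (k - 1)" using ab(3) m1(2) m10 by simp
            then show ?thesis using sg_scale[OF ab(2), of "w (k - 1)"] by simp
          qed
          then show ?thesis using gt m10 unfolding s_def by simp
        qed
      qed
    qed
    have eps: "sg (w i) = s * (if i < m1 then 1 else 0) - s + s * (if i < Suc m1 then 1 else 0)"
      if "i < k" for i unfolding eps0[OF that] by simp
    have Dsum: "(\<Sum>i<k. sg (w i) * vv k f i) =
        s * (if m1 = 0 then 0 else f (k - 1) + f (m1 - 1)) - 2 * s * f (k - 1) + s * (f (k - 1) + f m1)" for f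
    proof -
      have "(\<Sum>i<k. sg (w i) * vv k f i) = (\<Sum>i<k. s * ((if i < m1 then 1 else 0) * vv k f i) - s * vv k f i
             + s * ((if i < Suc m1 then 1 else 0) * vv k f i))"
        by (rule sum.cong) (auto simp: eps algebra_simps)
      also have "\<dots> = s * (\<Sum>i<k. (if i < m1 then 1 else 0) * vv k f i) - s * (\<Sum>i<k. vv k f i)
             + s * (\<Sum>i<k. (if i < Suc m1 then 1 else 0) * vv k f i)"
        by (simp add: sum_subtractf sum.distrib sum_distrib_left)
      also have "\<dots> = s * (if m1 = 0 then 0 else f (k - 1) + f (m1 - 1)) - 2 * s * f (k - 1) + s * (f (k - 1) + f m1)"
        using PS[where n="m1" and k=k and f=f] PS[where n="Suc m1" and k=k and f=f] sum_full[OF k0, of f] m1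
        by simp
      finally show ?thesis .
    qed
    define D1 where "D1 = (\<Sum>i<k. sg (w i) * vv k (\<lambda>i. fst (u i)) i)"
    define D2 where "D2 = (\<Sum>i<k. sg (w i) * vv k (\<lambda>i. snd (u i)) i)"
    define V1 where "V1 = vv k (\<lambda>i. fst (u i)) m1"
    define V2 where "V2 = vv k (\<lambda>i. snd (u i)) m1"
    define d where "d = D1 * V2 - D2 * V1"
    have d0: "d \<noteq> 0"
    proof (cases "m1 = 0")
      case True
      have kk: "k - 1 < k" using k0 by simp
      have "det2 (u (k - 1)) (u ((k - 1 + 1) mod k)) \<noteq> 0" using cyc_indep kk by blast
      moreover have "(k - 1 + 1) mod k = 0" using k0 by simp
      ultimately have dd: "det2 (u (k - 1)) (u 0) \<noteq> 0" by metis
      have "d = - 2 * s * det2 (u (k - 1)) (u 0)"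
        unfolding d_def D1_def D2_def V1_def V2_def Dsum using True
        by (simp add: vv_def det2_def algebra_simps)
      then show ?thesis using dd s1 by auto
    next
      case False
      have dd: "det2 (u (m1 - 1)) (u m1) > 0" using convex[rule_format, of "m1 - 1"] False m1 by auto
      have "d = 2 * s * det2 (u (m1 - 1)) (u m1)"
        unfolding d_def D1_def D2_def V1_def V2_def Dsum using False
        by (simp add: vv_def det2_def algebra_simps)
      then show ?thesis using dd s1 by auto
    qed
    define n where "n = nat \<bar>d\<bar>"
    have n1: "1 \<le> n" unfolding n_def using d0 by auto
    define G where "G = (\<lambda>(\<beta>::complex, \<gamma>::complex). \<lambda>m. if m < k then (if m = m1 then \<gamma> else \<beta> powi sg (w m)) else 1)"
    have sub: "?L \<subseteq> G ` ({\<beta>. \<beta> ^ n = 1} \<times> {\<gamma>. \<gamma> ^ n = 1})"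
    proof
      fix l assume lL: "l \<in> ?L"
      then obtain \<beta> where b0: "\<beta> \<noteq> 0" and lb: "\<forall>m<k. w m \<noteq> 0 \<longrightarrow> l m = \<beta> powi sg (w m)" by blast
      define \<gamma> where "\<gamma> = l m1"
      have g0: "\<gamma> \<noteq> 0" using lnz[OF lL] unfolding \<gamma>_def by auto
      have lb': "l m = \<beta> powi sg (w m) * (if m = m1 then \<gamma> else 1)" if "m < k" for m
        using lb nz[OF that] m1 that unfolding \<gamma>_def by (cases "m = m1") (auto simp: sg_def)
      have P: "(\<Prod>i<k. l i powi g i) = \<beta> powi (\<Sum>i<k. sg (w i) * g i) * \<gamma> powi g m1" for g
      proof -
        have "(\<Prod>i<k. l i powi g i) = (\<Prod>i<k. \<beta> powi (sg (w i) * g i) * (if i = m1 then \<gamma> powi g i else 1))"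
          by (rule prod.cong) (auto simp: lb' power_int_mult power_int_mult_distrib)
        also have "\<dots> = (\<Prod>i<k. \<beta> powi (sg (w i) * g i)) * (\<Prod>i<k. (if i = m1 then \<gamma> powi g i else 1))"
          by (rule prod.distrib)
        also have "(\<Prod>i<k. (if i = m1 then \<gamma> powi g i else 1)) = \<gamma> powi g m1"
          using m1 by (simp add: prod.delta)
        also have "(\<Prod>i<k. \<beta> powi (sg (w i) * g i)) = \<beta> powi (\<Sum>i<k. sg (w i) * g i)"
          by (rule powi_sum[OF b0])
        finally show ?thesis .
      qed
      have E1: "\<beta> powi D1 * \<gamma> powi V1 = 1"
        using prodE[OF lL] P[of "\<lambda>i. fst (vvec k u i)"] unfolding D1_def V1_def by (simp add: vvec_fst)
      have E2: "\<beta> powi D2 * \<gamma> powi V2 = 1"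
        using prodE[OF lL] P[of "\<lambda>i. snd (vvec k u i)"] unfolding D2_def V2_def by (simp add: vvec_snd)
      from elim2[OF b0 g0 E1 E2] have "\<beta> powi d = 1" "\<gamma> powi d = 1" unfolding d_def by auto
      hence r: "\<beta> ^ n = 1" "\<gamma> ^ n = 1" unfolding n_def using powi_root[OF _ d0] by blast+
      have "l = G (\<beta>, \<gamma>)"
      proof (rule ext)
        fix m show "l m = G (\<beta>, \<gamma>) m"
        proof (cases "m < k")
          case True then show ?thesis using lb'[OF True] m1 unfolding G_def \<gamma>_def
            by (cases "m = m1") (auto simp: sg_def)
        next
          case False then show ?thesis using lout[OF lL False] unfolding G_def by simp
        qed
      qed
      then show "l \<in> G ` ({\<beta>. \<beta> ^ n = 1} \<times> {\<gamma>. \<gamma> ^ n = 1})" using r by blast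
    qed
    show ?thesis by (rule finite_subset[OF sub]) (intro finite_imageI finite_cartesian_product finite_roots_unity n1)
  qed
qed



lemma unit_inv: "cmod z = 1 \<Longrightarrow> inverse z = cnj z"
proof -
  assume "cmod z = 1"
  hence "z * cnj z = 1" using complex_norm_square[of z] by simp
  thus ?thesis by (metis inverse_unique)
qed

lemma sg_neg: "sg (- x) = - sg x" by (auto simp: sg_def)

lemma cancel3: "a * x1 = b * x1 \<Longrightarrow> a * x2 = b * x2 \<Longrightarrow> a * x3 = b * x3 \<Longrightarrow> x1 \<noteq> 0 \<or> x2 \<noteq> 0 \<or> x3 \<noteq> 0 \<Longrightarrow> (a::real) = b"
  by auto

lemma unit_pow:
  assumes u: "cmod l0 = 1" and a: "a = 1 \<or> a = -1" and b: "b = 1 \<or> b = -1"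
  shows "(if a = b then l0 else cnj l0) = (if b = 1 then l0 else cnj l0) powi a"
proof -
  have i1: "inverse l0 = cnj l0" using unit_inv[OF u] .
  have i2: "inverse (cnj l0) = l0" using i1 by (metis complex_cnj_cnj complex_cnj_inverse)
  show ?thesis using a b i1 i2 by (auto simp: power_int_minus)
qed

lemma GS_sub: "G_S k u \<subseteq> torusT k"
  unfolding G_S_def torusT_def liealg_g_def by auto

lemma part2:
  assumes k2: "2 \<le> k"
    and cyc_indep: "\<forall>i<k. det2 (u i) (u ((i + 1) mod k)) \<noteq> 0"
    and halfplane: "\<forall>i<k. (fst (u i) > 0 \<and> snd (u i) = 0) \<or> snd (u i) > 0"
    and convex: "\<forall>i. i + 1 < k \<longrightarrow> det2 (u i) (u (i + 1)) > 0"
    and trange: "\<forall>i<k. 0 \<le> t i \<and> t i < 2 * pi"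
    and tmono: "\<forall>i j. i < j \<and> j < k \<longrightarrow> t i < t j"
    and P: "inP k B q" and T: "nu_W_tensor k t q"
  shows "finite (stabHP k q (G_S k u))"
proof -
  obtain w x1 x2 x3 where wW: "w \<in> Wspace k t"
    and wx: "\<forall>m<k. nu1 k q m = w m * x1 \<and> nu2 k q m = w m * x2 \<and> nu3 k q m = w m * x3"
    using T unfolding nu_W_tensor_def by blast
  have nqw: "nq1 (q m) = w m * x1" "nq2 (q m) = w m * x2" "nq3 (q m) = w m * x3" if "m < k" for m
    using wx that by (simp_all add: nu_eq)
  obtain m0 where m0: "m0 < k" "q m0 \<noteq> (0,0)" using P unfolding inP_def by blast
  define e where "e = q m0"
  have e0: "e \<noteq> (0,0)" using m0 e_def by simp
  have eX: "nq1 e \<noteq> 0 \<or> nq2 e \<noteq> 0 \<or> nq3 e \<noteq> 0" using Q9 e0 by blast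
  have wm0: "w m0 \<noteq> 0" and X: "x1 \<noteq> 0 \<or> x2 \<noteq> 0 \<or> x3 \<noteq> 0"
    using eX nqw[OF m0(1)] unfolding e_def by auto
  have qnz: "q m \<noteq> (0,0)" if "m < k" "w m \<noteq> 0" for m
  proof
    assume "q m = (0,0)"
    hence "w m * x1 = 0" "w m * x2 = 0" "w m * x3 = 0" using nqw[OF that(1)]
      by (simp_all add: nq1_def nq2_def nq3_def)
    thus False using X that(2) by auto
  qed
  define \<sigma> where "\<sigma> = sg (w m0)"
  have \<sigma>1: "\<sigma> = 1 \<or> \<sigma> = -1" using wm0 sg_cases[of "w m0"] sg_0_iff[of "w m0"] unfolding \<sigma>_def by auto
  have sub: "stabHP k q (G_S k u) \<subseteq> {l. (\<exists>\<theta>\<in>liealg_g k u. l = (\<lambda>m. cis (\<theta> m))) \<and>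
                    (\<exists>\<beta>. \<beta> \<noteq> 0 \<and> (\<forall>m<k. w m \<noteq> 0 \<longrightarrow> l m = \<beta> powi sg (w m)))}"
  proof
    fix l assume l: "l \<in> stabHP k q (G_S k u)"
    then obtain h where hq: "\<forall>m<k. qrmul (q m) (l m) = qlmul h (q m)"
      and lG: "l \<in> G_S k u" unfolding stabHP_def by blast
    from lG obtain \<theta> where th: "\<theta> \<in> liealg_g k u" "l = (\<lambda>m. cis (\<theta> m))" unfolding G_S_def by blast
    define l0 where "l0 = l m0"
    have u0: "cmod l0 = 1" unfolding l0_def th(2) by simp
    have he: "qlmul h e = qrmul e l0" using hq m0 unfolding e_def l0_def by simp
    define \<beta> where "\<beta> = (if \<sigma> = 1 then l0 else cnj l0)"
    have b0: "\<beta> \<noteq> 0" using u0 unfolding \<beta>_def by auto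
    have "l m = \<beta> powi sg (w m)" if m: "m < k" and wm: "w m \<noteq> 0" for m
    proof -
      have s1: "sg (w m) = 1 \<or> sg (w m) = -1" using wm sg_cases[of "w m"] sg_0_iff[of "w m"] by auto
      have C: "(l m = l0 \<and> l m = cnj l0) \<or> (l m = l0 \<and> (\<exists>c. c \<noteq> 0 \<and> q m = qrmul e c))
         \<or> (l m = cnj l0 \<and> (\<exists>c. c \<noteq> 0 \<and> q m = qrmul (qj e) c))"
        using core[OF e0 qnz[OF m wm] he hq[rule_format, OF m, symmetric]] .
      have "l m = (if sg (w m) = \<sigma> then l0 else cnj l0)"
        using C
      proof (elim disjE conjE exE)
        assume "l m = l0" "l m = cnj l0" then show ?thesis by simp
      next
        fix c assume lm: "l m = l0" and c: "c \<noteq> 0" "q m = qrmul e c"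
        have "w m * x1 = (cmod c)\<^sup>2 * w m0 * x1" "w m * x2 = (cmod c)\<^sup>2 * w m0 * x2"
          "w m * x3 = (cmod c)\<^sup>2 * w m0 * x3"
          using nqw[OF m] nqw[OF m0(1)] c(2) unfolding e_def by (simp_all add: Q8) auto
        hence "w m = (cmod c)\<^sup>2 * w m0" using cancel3 X by (metis mult.assoc)
        hence "sg (w m) = \<sigma>" unfolding \<sigma>_def using sg_scale[of "(cmod c)\<^sup>2" "w m0"] c(1) by simp
        then show ?thesis using lm by simp
      next
        fix c assume lm: "l m = cnj l0" and c: "c \<noteq> 0" "q m = qrmul (qj e) c"
        have "w m * x1 = (- (cmod c)\<^sup>2 * w m0) * x1" "w m * x2 = (- (cmod c)\<^sup>2 * w m0) * x2"
          "w m * x3 = (- (cmod c)\<^sup>2 * w m0) * x3"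
          using nqw[OF m] nqw[OF m0(1)] c(2) unfolding e_def by (simp_all add: Q8 Q8j)
        hence "w m = - (cmod c)\<^sup>2 * w m0" using cancel3 X by metis
        hence "sg (w m) = - \<sigma>" unfolding \<sigma>_def using sg_scale[of "(cmod c)\<^sup>2" "w m0"] c(1)
          by (simp add: sg_neg)
        then show ?thesis using lm \<sigma>1 by auto
      qed
      also have "\<dots> = \<beta> powi sg (w m)" unfolding \<beta>_def by (rule unit_pow[OF u0 s1 \<sigma>1])
      finally show ?thesis .
    qed
    then show "l \<in> {l. (\<exists>\<theta>\<in>liealg_g k u. l = (\<lambda>m. cis (\<theta> m))) \<and>
                    (\<exists>\<beta>. \<beta> \<noteq> 0 \<and> (\<forall>m<k. w m \<noteq> 0 \<longrightarrow> l m = \<beta> powi sg (w m)))}"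
      using th b0 by blast
  qed
  show ?thesis
    by (rule finite_subset[OF sub LF[OF k2 cyc_indep halfplane convex trange tmono wW m0(1) wm0]])
qed


theorem mainTheorem5:
  fixes k :: nat
    and u :: "nat \<Rightarrow> int \<times> int"
    and \<zeta> :: "nat \<Rightarrow> complex"
    and t :: "nat \<Rightarrow> real"
    and B :: "(nat \<Rightarrow> real) \<Rightarrow> 'g::real_vector"
  assumes gen: "\<forall>a b :: int. \<exists>c :: nat \<Rightarrow> int.
              a = (\<Sum>i<k. c i * fst (u i)) \<and> b = (\<Sum>i<k. c i * snd (u i))"
    and cyc_indep: "\<forall>i<k. det2 (u i) (u ((i + 1) mod k)) \<noteq> 0"
    and halfplane: "\<forall>i<k. (fst (u i) > 0 \<and> snd (u i) = 0) \<or> snd (u i) > 0"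
    and u1: "fst (u 0) > 0 \<and> snd (u 0) = 0"
    and convex: "\<forall>i. i + 1 < k \<longrightarrow> det2 (u i) (u (i + 1)) > 0"
    and zeta: "\<forall>i<k. \<zeta> i = cis (t i) \<and> 0 \<le> t i \<and> t i < 2 * pi"
    and t0: "t 0 = 0"
    and tmono: "\<forall>i j. i < j \<and> j < k \<longrightarrow> t i < t j"
    and B_add: "\<forall>w w'. B (\<lambda>i. w i + w' i) = B w + B w'"
    and B_scale: "\<forall>(a::real) w. B (\<lambda>i. a * w i) = a *\<^sub>R B w"
    and B_ker: "\<forall>w. (\<forall>i\<ge>k. w i = 0) \<longrightarrow> (B w = 0 \<longleftrightarrow> w \<in> Wspace k t)"
  shows "(\<forall>q. inP k B q \<and> \<not> nu_W_tensor k t q \<longrightarrow> finite (stabHP k q (torusT k)))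
       \<and> (\<forall>q. inP k B q \<longrightarrow> finite (stabHP k q (G_S k u)))"
  proof -
  have k2: "2 \<le> k"
  proof (rule ccontr)
    assume "\<not> 2 \<le> k"
    hence "k = 0 \<or> k = 1" by auto
    moreover obtain c :: "nat \<Rightarrow> int" where "0 = (\<Sum>i<k. c i * fst (u i))" "1 = (\<Sum>i<k. c i * snd (u i))"
      using gen by blast
    ultimately show False using u1 by auto
  qed
  have trange: "\<forall>i<k. 0 \<le> t i \<and> t i < 2 * pi" using zeta by auto
  have p1: "\<forall>q. inP k B q \<and> \<not> nu_W_tensor k t q \<longrightarrow> finite (stabHP k q (torusT k))"
    using part1[OF B_ker] by blast
  have "finite (stabHP k q (G_S k u))" if P: "inP k B q" for q
  proof (cases "nu_W_tensor k t q")
    case True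
    show ?thesis by (rule part2[OF k2 cyc_indep halfplane convex trange tmono P True])
  next
    case False
    have "stabHP k q (G_S k u) \<subseteq> stabHP k q (torusT k)" using GS_sub unfolding stabHP_def by blast
    then show ?thesis using p1 P False finite_subset by blast
  qed
  with p1 show ?thesis by blast
qed

end
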